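(* Let $Q_1,Q_2\in\mathbb{R}^{(m+n)\times(m+n)}$ be permutation matrices with $Q_1Q_2^{\mathsf T}=\begin{bmatrix}Q_{11}&Q_{12}\\Q_{21}&Q_{22}\end{bmatrix}$ ($Q_{11}\in\mathbb{R}^{m\times m}$, $Q_{22}\in\mathbb{R}^{n\times n}$). For $X\in\mathbb{C}^{n\times m}$, $Y\in\mathbb{C}^{m\times n}$ set $$W=Q_{22}-XQ_{12}+(Q_{21}-XQ_{11})Y\in\mathbb{C}^{n\times n},\qquad \widetilde W=Q_{11}^{\mathsf T}-YQ_{12}^{\mathsf T}+(Q_{21}^{\mathsf T}-YQ_{22}^{\mathsf T})X\in\mathbb{C}^{m\times m}.$$ Then $W$ is nonsingular if and only if $\widetilde W$ is nonsingular. Moreover, when they are nonsingular, for any $E\in\mathbb{C}^{m\times m}$, $F\in\mathbb{C}^{n\times n}$ the two formulas $$E_+=E\big[Q_{11}+(Q_{11}Y+Q_{12})W^{-1}(XQ_{11}-Q_{21})\big]E,\ \ F_+=FW^{-1}F,\ \ X_+=X+FW^{-1}(XQ_{11}-Q_{21})E,\ \ Y_+=Y+E(Q_{11}Y+Q_{12})W^{-1}F$$ and $$E_+=E\widetilde W^{-1}E,\ \ F_+=F\big[Q_{22}^{\mathsf T}+(Q_{22}^{\mathsf T}X+Q_{12}^{\mathsf T})\widetilde W^{-1}(YQ_{22}^{\mathsf T}-Q_{21}^{\mathsf T})\big]F,\ \ X_+=X+F(Q_{22}^{\mathsf T}X+Q_{12}^{\mathsf T})\widetilde W^{-1}E,\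 \ Y_+=Y+E\widetilde W^{-1}(YQ_{22}^{\mathsf T}-Q_{21}^{\mathsf T})F$$ produce the same quadruple $(E_+,F_+,X_+,Y_+)$. *)

theory Defs
  imports "Jordan_Normal_Form.Matrix" "HOL-Combinatorics.Permutations" Complex_Main
begin

definition perm_matrix :: "nat \<Rightarrow> real mat \<Rightarrow> bool" where
  "perm_matrix N Q \<longleftrightarrow> (\<exists>\<sigma>. \<sigma> permutes {..<N} \<and>
      Q = mat N N (\<lambda>(i,j). if \<sigma> i = j then 1 else 0))"

end

theory Submission
  imports Defs "Jordan_Normal_Form.Determinant"
begin

lemma perm_matrix_carrier: "perm_matrix N P \<Longrightarrow> P \<in> carrier_mat N N"
  unfolding perm_matrix_def by auto

lemma perm_matrix_orth: assumes "perm_matrix N P" shows "P * transpose_mat P = 1\<^sub>m N"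
proof -
  from assms obtain \<sigma> where s: "\<sigma> permutes {..<N}"
    and P: "P = mat N N (\<lambda>(i,j). if \<sigma> i = j then 1 else 0)" unfolding perm_matrix_def by auto
  have inj: "\<sigma> i = \<sigma> j \<longleftrightarrow> i = j" for i j using s by (metis permutes_inj injD)
  have lt: "i < N \<Longrightarrow> \<sigma> i < N" for i using s by (meson lessThan_iff permutes_in_image)
  show ?thesis
  proof (rule eq_matI)
    fix i j assume i: "i < dim_row (1\<^sub>m N :: real mat)" and j: "j < dim_col (1\<^sub>m N :: real mat)"
    have "(P * transpose_mat P) $$ (i,j) = (\<Sum>k<N. (if \<sigma> i = k then 1 else 0) * (if \<sigma> j = k then 1 else 0 :: real))"
      using i j unfolding P by (simp add: scalar_prod_def lessThan_atLeast0)
    also have "\<dots> = (\<Sum>k\<in>{\<sigma> i}. (if \<sigma> j = k then 1 else 0 :: real))"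
      by (rule sum.mono_neutral_cong_right) (use lt i in auto)
    also have "\<dots> = 1\<^sub>m N $$ (i,j)" using i j inj by auto
    finally show "(P * transpose_mat P) $$ (i,j) = 1\<^sub>m N $$ (i,j)" .
  qed (use P in auto)
qed

lemma four_block_mat_inj:
  assumes c: "A \<in> carrier_mat nr1 nc1" "A' \<in> carrier_mat nr1 nc1"
    "B \<in> carrier_mat nr1 nc2" "B' \<in> carrier_mat nr1 nc2"
    "C \<in> carrier_mat nr2 nc1" "C' \<in> carrier_mat nr2 nc1"
    "D \<in> carrier_mat nr2 nc2" "D' \<in> carrier_mat nr2 nc2"
    and eq: "four_block_mat A B C D = four_block_mat A' B' C' D'"
  shows "A = A' \<and> B = B' \<and> C = C' \<and> D = D'"
proof -
  have e: "four_block_mat A B C D $$ (i,j) = four_block_mat A' B' C' D' $$ (i,j)" for i j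
    using eq by simp
  have "A = A'"
  proof (rule eq_matI)
    fix i j assume "i < dim_row A'" "j < dim_col A'"
    then show "A $$ (i,j) = A' $$ (i,j)" using e[of i j] c by auto
  qed (use c in auto)
  moreover have "B = B'"
  proof (rule eq_matI)
    fix i j assume "i < dim_row B'" "j < dim_col B'"
    then show "B $$ (i,j) = B' $$ (i,j)" using e[of i "j + nc1"] c by auto
  qed (use c in auto)
  moreover have "C = C'"
  proof (rule eq_matI)
    fix i j assume "i < dim_row C'" "j < dim_col C'"
    then show "C $$ (i,j) = C' $$ (i,j)" using e[of "i + nr1" j] c by auto
  qed (use c in auto)
  moreover have "D = D'"
  proof (rule eq_matI)
    fix i j assume "i < dim_row D'" "j < dim_col D'"
    then show "D $$ (i,j) = D' $$ (i,j)" using e[of "i + nr1" "j + nc1"] c by auto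
  qed (use c in auto)
  ultimately show ?thesis by blast
qed

lemma neg_zero_mat[simp]: "- (0\<^sub>m nr nc) = (0\<^sub>m nr nc :: 'a :: group_add mat)"
  by (intro eq_matI, auto)

lemma add_neg_self_mat[simp]: "A \<in> carrier_mat nr nc \<Longrightarrow> A + - A = (0\<^sub>m nr nc :: 'a :: group_add mat)"
  by (intro eq_matI, auto)

lemma cancel_mat: "A * B = 1\<^sub>m N \<Longrightarrow> A \<in> carrier_mat N N \<Longrightarrow> B \<in> carrier_mat N N \<Longrightarrow>
  Z \<in> carrier_mat N nc \<Longrightarrow> A * (B * (Z :: 'a :: semiring_1 mat)) = Z"
  by (metis assoc_mult_mat left_mult_one_mat)

lemma neg_of_add_zero_mat: "A \<in> carrier_mat nr nc \<Longrightarrow> B \<in> carrier_mat nr nc \<Longrightarrow>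
  A + B = 0\<^sub>m nr nc \<Longrightarrow> B = - (A :: 'a :: group_add mat)"
proof (intro eq_matI)
  fix i j assume "A \<in> carrier_mat nr nc" "B \<in> carrier_mat nr nc" "A + B = 0\<^sub>m nr nc"
    "i < dim_row (- A)" "j < dim_col (- A)"
  then show "B $$ (i,j) = (- A) $$ (i,j)"
    by (metis carrier_matD index_add_mat(1) index_uminus_mat(1,2,3) index_zero_mat(1) minus_unique)
qed auto

lemma neg_of_add_zero_mat': "A \<in> carrier_mat nr nc \<Longrightarrow> B \<in> carrier_mat nr nc \<Longrightarrow>
  A + B = 0\<^sub>m nr nc \<Longrightarrow> A = - (B :: 'a :: ab_group_add mat)"
  using neg_of_add_zero_mat[of B nr nc A] comm_add_mat[of A nr nc B] by auto

lemma minus_swap_neg_mat: "A \<in> carrier_mat nr nc \<Longrightarrow> B \<in> carrier_mat nr nc \<Longrightarrow>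
  A - B = - (B - (A :: 'a :: ab_group_add mat))"
  by (intro eq_matI, auto)

lemma minus_neg_mat: "A \<in> carrier_mat nr nc \<Longrightarrow> B \<in> carrier_mat nr nc \<Longrightarrow>
  A - - B = A + (B :: 'a :: ab_group_add mat)"
  by (intro eq_matI, auto)

lemma invertible_obtain: assumes "invertible_mat (A :: 'a :: semiring_1 mat)" "A \<in> carrier_mat k k"
  shows "\<exists>B \<in> carrier_mat k k. A * B = 1\<^sub>m k \<and> B * A = 1\<^sub>m k"
proof -
  from assms obtain B where AB: "A * B = 1\<^sub>m (dim_row A)" and BA: "B * A = 1\<^sub>m (dim_row B)"
    unfolding invertible_mat_def inverts_mat_def by auto
  have "dim_col B = k" using AB assms(2) by (metis carrier_matD(1) index_mult_mat(3) index_one_mat(3))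
  moreover have "dim_row B = k" using BA assms(2) by (metis carrier_matD(2) index_mult_mat(3) index_one_mat(3))
  ultimately show ?thesis using AB BA assms(2) by (intro bexI[of _ B]) auto
qed

lemma invertible_intro: assumes "A \<in> carrier_mat k k" "B \<in> carrier_mat k k" "A * B = 1\<^sub>m (k::nat)"
  shows "invertible_mat (A :: 'a :: field mat)"
proof -
  have "B * A = 1\<^sub>m k" by (rule mat_mult_left_right_inverse[OF assms])
  then show ?thesis using assms unfolding invertible_mat_def inverts_mat_def square_mat.simps
    by (intro conjI exI[of _ B]) auto
qed

lemma neg_add_swap_mat: "A \<in> carrier_mat nr nc \<Longrightarrow> B \<in> carrier_mat nr nc \<Longrightarrow>
  - A + B = B - (A :: 'a :: ab_group_add mat)"
  by (intro eq_matI, auto)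

theorem mainTheorem3:
  fixes m n :: nat
    and Q1 Q2 :: "real mat"
    and Q11 Q12 Q21 Q22 X Y W Wt :: "complex mat"
  assumes Q1: "perm_matrix (m + n) Q1"
    and Q2: "perm_matrix (m + n) Q2"
    and blocks: "split_block (map_mat complex_of_real (Q1 * transpose_mat Q2)) m m
                   = (Q11, Q12, Q21, Q22)"
    and X: "X \<in> carrier_mat n m"
    and Y: "Y \<in> carrier_mat m n"
    and W: "W = Q22 - X * Q12 + (Q21 - X * Q11) * Y"
    and Wt: "Wt = transpose_mat Q11 - Y * transpose_mat Q12
                 + (transpose_mat Q21 - Y * transpose_mat Q22) * X"
  shows "(invertible_mat W \<longleftrightarrow> invertible_mat Wt) \<and>
    (\<forall>Wi Wti E F.
       Wi \<in> carrier_mat n n \<and> W * Wi = 1\<^sub>m n \<and> Wi * W = 1\<^sub>m n \<and>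
       Wti \<in> carrier_mat m m \<and> Wt * Wti = 1\<^sub>m m \<and> Wti * Wt = 1\<^sub>m m \<and>
       E \<in> carrier_mat m m \<and> F \<in> carrier_mat n n \<longrightarrow>
         E * (Q11 + (Q11 * Y + Q12) * Wi * (X * Q11 - Q21)) * E = E * Wti * E \<and>
         F * Wi * F = F * (transpose_mat Q22 + (transpose_mat Q22 * X + transpose_mat Q12) * Wti
                             * (Y * transpose_mat Q22 - transpose_mat Q21)) * F \<and>
         X + F * Wi * (X * Q11 - Q21) * E = X + F * (transpose_mat Q22 * X + transpose_mat Q12) * Wti * E \<and>
         Y + E * (Q11 * Y + Q12) * Wi * F = Y + E * Wti * (Y * transpose_mat Q22 - transpose_mat Q21) * F)"
proof -
  define N where "N = m + n"
  define R where "R = Q1 * transpose_mat Q2"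
  define Qc where "Qc = map_mat complex_of_real R"
  have Q1c: "Q1 \<in> carrier_mat N N" and Q2c: "Q2 \<in> carrier_mat N N"
    using Q1 Q2 perm_matrix_carrier N_def by auto
  have o1: "Q1 * transpose_mat Q1 = 1\<^sub>m N" "Q2 * transpose_mat Q2 = 1\<^sub>m N"
    using Q1 Q2 perm_matrix_orth N_def by auto
  have o1': "transpose_mat Q2 * Q2 = 1\<^sub>m N"
    by (rule mat_mult_left_right_inverse[OF Q2c _ o1(2)]) (use Q2c in auto)
  have Rc: "R \<in> carrier_mat N N" using Q1c Q2c R_def by auto
  have RRT: "R * transpose_mat R = 1\<^sub>m N"
  proof -
    have "R * transpose_mat R = Q1 * (transpose_mat Q2 * Q2) * transpose_mat Q1"
    proof -
      have t: "transpose_mat Q1 \<in> carrier_mat N N" "transpose_mat Q2 \<in> carrier_mat N N"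
        using Q1c Q2c by auto
      show ?thesis
        unfolding R_def using Q1c Q2c t by (simp add: transpose_mult[of _ N N] assoc_mult_mat[of _ N N _ N _ N])
    qed
    also have "\<dots> = 1\<^sub>m N" using o1' o1 Q1c by simp
    finally show ?thesis .
  qed
  have RTR: "transpose_mat R * R = 1\<^sub>m N"
    by (rule mat_mult_left_right_inverse[OF Rc _ RRT]) (use Rc in auto)
  have Qcc: "Qc \<in> carrier_mat N N" using Rc Qc_def by auto
  have QQT: "Qc * transpose_mat Qc = 1\<^sub>m N"
    unfolding Qc_def map_mat_transpose
    using Rc RRT by (simp add: of_real_hom.mat_hom_mult[of R N N "transpose_mat R" N, symmetric] of_real_hom.mat_hom_one)
  have QTQ: "transpose_mat Qc * Qc = 1\<^sub>m N"
    unfolding Qc_def map_mat_transpose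
    using Rc RTR by (simp add: of_real_hom.mat_hom_mult[of "transpose_mat R" N N R N, symmetric] of_real_hom.mat_hom_one)
  have bl: "split_block Qc m m = (Q11, Q12, Q21, Q22)" using blocks Qc_def R_def by simp
  note sb = split_block[OF bl, of n n, unfolded N_def[symmetric]]
  have A: "Q11 \<in> carrier_mat m m" and B: "Q12 \<in> carrier_mat m n"
    and C: "Q21 \<in> carrier_mat n m" and D: "Q22 \<in> carrier_mat n n"
    and Qeq: "Qc = four_block_mat Q11 Q12 Q21 Q22"
    using sb Qcc by (auto simp: N_def)
  have QTeq: "transpose_mat Qc = four_block_mat (transpose_mat Q11) (transpose_mat Q21) (transpose_mat Q12) (transpose_mat Q22)"
    unfolding Qeq using A B C D by (rule transpose_four_block_mat)
  define Lx where "Lx = four_block_mat (1\<^sub>m m) (0\<^sub>m m n) (- X) (1\<^sub>m n)"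
  define Lx' where "Lx' = four_block_mat (1\<^sub>m m) (0\<^sub>m m n) X (1\<^sub>m n)"
  define Uy where "Uy = four_block_mat (1\<^sub>m m) Y (0\<^sub>m n m) (1\<^sub>m n)"
  define Uy' where "Uy' = four_block_mat (1\<^sub>m m) (- Y) (0\<^sub>m n m) (1\<^sub>m n)"
  have Lxc: "Lx \<in> carrier_mat N N" and Lx'c: "Lx' \<in> carrier_mat N N"
    and Uyc: "Uy \<in> carrier_mat N N" and Uy'c: "Uy' \<in> carrier_mat N N"
    unfolding Lx_def Lx'_def Uy_def Uy'_def N_def by auto
  have LL: "Lx * Lx' = 1\<^sub>m N" "Lx' * Lx = 1\<^sub>m N"
    unfolding Lx_def Lx'_def N_def using X
    by (simp_all add: mult_four_block_mat[of _ m m _ n _ n _ _ m _ n])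
  have UU: "Uy * Uy' = 1\<^sub>m N" "Uy' * Uy = 1\<^sub>m N"
    unfolding Uy_def Uy'_def N_def using Y
    by (simp_all add: mult_four_block_mat[of _ m m _ n _ n _ _ m _ n])
  have At: "transpose_mat Q11 \<in> carrier_mat m m" and Bt: "transpose_mat Q12 \<in> carrier_mat n m"
    and Ct: "transpose_mat Q21 \<in> carrier_mat m n" and Dt: "transpose_mat Q22 \<in> carrier_mat n n"
    using A B C D by auto
  define R1 where "R1 = Q21 - X * Q11"
  define J1 where "J1 = Q11 * Y + Q12"
  define T2 where "T2 = transpose_mat Q21 - Y * transpose_mat Q22"
  define K2 where "K2 = transpose_mat Q12 + transpose_mat Q22 * X"
  have R1c: "R1 \<in> carrier_mat n m" and J1c: "J1 \<in> carrier_mat m n"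
    and T2c: "T2 \<in> carrier_mat m n" and K2c: "K2 \<in> carrier_mat n m"
    and Wc: "W \<in> carrier_mat n n" and Wtc: "Wt \<in> carrier_mat m m"
    unfolding R1_def J1_def T2_def K2_def W Wt using A B C D X Y by auto
  have LQ: "Lx * Qc = four_block_mat Q11 Q12 (Q21 - X * Q11) (Q22 - X * Q12)"
    unfolding Lx_def Qeq using A B C D X
    by (simp add: mult_four_block_mat[of _ m m _ n _ n _ _ m _ n] neg_add_swap_mat[of "X * Q11" n m] neg_add_swap_mat[of "X * Q12" n n])
  have W': "W = (Q21 - X * Q11) * Y + (Q22 - X * Q12)"
    unfolding W by (rule comm_add_mat[of _ n n]) (use A B C D X Y in \<open>auto intro: minus_carrier_mat\<close>)
  have M: "Lx * Qc * Uy = four_block_mat Q11 J1 R1 W"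
    unfolding LQ Uy_def J1_def R1_def W' using A B C D X Y
    by (simp add: mult_four_block_mat[of _ m m _ n _ n _ _ m _ n] minus_carrier_mat)
  have UQ: "Uy' * transpose_mat Qc = four_block_mat (transpose_mat Q11 - Y * transpose_mat Q12) T2 (transpose_mat Q12) (transpose_mat Q22)"
    unfolding Uy'_def QTeq T2_def using At Bt Ct Dt X Y
    by (simp add: mult_four_block_mat[of _ m m _ n _ n _ _ m _ n] add_uminus_minus_mat[of _ m])
  have Mi: "Uy' * transpose_mat Qc * Lx' = four_block_mat Wt T2 K2 (transpose_mat Q22)"
    unfolding UQ Lx'_def K2_def Wt T2_def using At Bt Ct Dt X Y
    by (simp add: mult_four_block_mat[of _ m m _ n _ n _ _ m _ n] minus_carrier_mat)
  have QTc: "transpose_mat Qc \<in> carrier_mat N N" using Qcc by auto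
  have MMi: "(Lx * Qc * Uy) * (Uy' * transpose_mat Qc * Lx') = 1\<^sub>m N"
    using Lxc Lx'c Uyc Uy'c Qcc QTc
    by (simp add: assoc_mult_mat[of _ N N _ N _ N] cancel_mat[OF UU(1), where nc=N] cancel_mat[OF QQT, where nc=N] LL)
  have MiM: "(Uy' * transpose_mat Qc * Lx') * (Lx * Qc * Uy) = 1\<^sub>m N"
    using Lxc Lx'c Uyc Uy'c Qcc QTc
    by (simp add: assoc_mult_mat[of _ N N _ N _ N] cancel_mat[OF LL(2), where nc=N] cancel_mat[OF QTQ, where nc=N] UU)
  have one: "1\<^sub>m N = four_block_mat (1\<^sub>m m) (0\<^sub>m m n) (0\<^sub>m n m) (1\<^sub>m n)"
    unfolding N_def by simp
  have e1: "four_block_mat (Q11 * Wt + J1 * K2) (Q11 * T2 + J1 * transpose_mat Q22)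
      (R1 * Wt + W * K2) (R1 * T2 + W * transpose_mat Q22) = four_block_mat (1\<^sub>m m) (0\<^sub>m m n) (0\<^sub>m n m) (1\<^sub>m n)"
    using MMi unfolding M Mi one
    by (subst (asm) mult_four_block_mat[of _ m m _ n _ n _ _ m _ n]) (use A J1c R1c Wc Wtc T2c K2c Dt in auto)
  note e1' = four_block_mat_inj[of _ m m _ _ n _ _ n, OF _ _ _ _ _ _ _ _ e1]
  have E21: "R1 * Wt + W * K2 = 0\<^sub>m n m" and E22: "R1 * T2 + W * transpose_mat Q22 = 1\<^sub>m n"
    using e1' A J1c R1c Wc Wtc T2c K2c Dt by auto
  have e2: "four_block_mat (Wt * Q11 + T2 * R1) (Wt * J1 + T2 * W)
      (K2 * Q11 + transpose_mat Q22 * R1) (K2 * J1 + transpose_mat Q22 * W) = four_block_mat (1\<^sub>m m) (0\<^sub>m m n) (0\<^sub>m n m) (1\<^sub>m n)"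
    using MiM unfolding M Mi one
    by (subst (asm) mult_four_block_mat[of _ m m _ n _ n _ _ m _ n]) (use A J1c R1c Wc Wtc T2c K2c Dt in auto)
  note e2' = four_block_mat_inj[of _ m m _ _ n _ _ n, OF _ _ _ _ _ _ _ _ e2]
  have F11: "Wt * Q11 + T2 * R1 = 1\<^sub>m m" and F12: "Wt * J1 + T2 * W = 0\<^sub>m m n"
    using e2' A J1c R1c Wc Wtc T2c K2c Dt by auto
  have G1: "R1 * Wt = - (W * K2)"
    by (rule neg_of_add_zero_mat'[OF _ _ E21]) (use R1c Wtc Wc K2c in auto)
  have G2: "T2 * W = - (Wt * J1)"
    by (rule neg_of_add_zero_mat[OF _ _ F12]) (use T2c Wtc Wc J1c in auto)
  have G1': "W * K2 = - (R1 * Wt)"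
    by (rule neg_of_add_zero_mat[OF _ _ E21]) (use R1c Wtc Wc K2c in auto)
  have G2': "Wt * J1 = - (T2 * W)"
    by (rule neg_of_add_zero_mat'[OF _ _ F12]) (use T2c Wtc Wc J1c in auto)
  have K2eq: "transpose_mat Q22 * X + transpose_mat Q12 = K2"
    unfolding K2_def by (rule comm_add_mat) (use Dt Bt X in auto)
  have T2eq: "Y * transpose_mat Q22 - transpose_mat Q21 = - T2"
    unfolding T2_def by (rule minus_swap_neg_mat) (use Dt Ct Y in auto)
  have R1eq: "X * Q11 - Q21 = - R1"
    unfolding R1_def by (rule minus_swap_neg_mat) (use A C X in auto)
  define Zf where "Zf = (\<lambda>Wti. transpose_mat Q22 + (transpose_mat Q22 * X + transpose_mat Q12) * Wti
                             * (Y * transpose_mat Q22 - transpose_mat Q21))"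
  define Yf where "Yf = (\<lambda>Wi. Q11 + (Q11 * Y + Q12) * Wi * (X * Q11 - Q21))"
  have HW: "W * Zf Wti = 1\<^sub>m n" "Zf Wti \<in> carrier_mat n n" if Wti: "Wti \<in> carrier_mat m m" "Wt * Wti = 1\<^sub>m m" for Wti
  proof -
    have P: "K2 * Wti * (- T2) = - (K2 * (Wti * T2))" using K2c Wti T2c by simp
    have Z: "Zf Wti = transpose_mat Q22 - K2 * (Wti * T2)"
      unfolding Zf_def K2eq T2eq P by (rule add_uminus_minus_mat) (use Dt K2c Wti T2c in auto)
    show "Zf Wti \<in> carrier_mat n n" unfolding Z using Dt K2c Wti T2c by (auto intro: minus_carrier_mat)
    have "W * (K2 * (Wti * T2)) = (W * K2) * (Wti * T2)"
      using assoc_mult_mat[of W n n K2 m "Wti * T2" n] Wc K2c Wti T2c by simp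
    also have "\<dots> = - (R1 * Wt) * (Wti * T2)" unfolding G1' ..
    also have "\<dots> = - (R1 * ((Wt * Wti) * T2))"
      using assoc_mult_mat[of R1 n m Wt m "Wti * T2" n] assoc_mult_mat[of Wt m m Wti m T2 n] R1c Wtc Wti T2c by simp
    also have "\<dots> = - (R1 * T2)" using Wti T2c by simp
    finally have WP: "W * (K2 * (Wti * T2)) = - (R1 * T2)" .
    have "W * Zf Wti = W * transpose_mat Q22 - W * (K2 * (Wti * T2))"
      unfolding Z by (rule mult_minus_distrib_mat) (use Wc Dt K2c Wti T2c in auto)
    also have "\<dots> = W * transpose_mat Q22 + R1 * T2" unfolding WP
      by (rule minus_neg_mat) (use Wc Dt R1c T2c in auto)
    also have "\<dots> = 1\<^sub>m n" using E22 comm_add_mat[of "R1 * T2" n n "W * transpose_mat Q22"] R1c T2c Wc Dt by auto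
    finally show "W * Zf Wti = 1\<^sub>m n" .
  qed
  have HWt: "Wt * Yf Wi = 1\<^sub>m m" "Yf Wi \<in> carrier_mat m m" if Wi: "Wi \<in> carrier_mat n n" "W * Wi = 1\<^sub>m n" for Wi
  proof -
    have J1eq: "Q11 * Y + Q12 = J1" unfolding J1_def ..
    have P: "J1 * Wi * (- R1) = - (J1 * (Wi * R1))" using J1c Wi R1c by simp
    have Z: "Yf Wi = Q11 - J1 * (Wi * R1)"
      unfolding Yf_def J1eq R1eq P by (rule add_uminus_minus_mat) (use A J1c Wi R1c in auto)
    show "Yf Wi \<in> carrier_mat m m" unfolding Z using A J1c Wi R1c by (auto intro: minus_carrier_mat)
    have "Wt * (J1 * (Wi * R1)) = (Wt * J1) * (Wi * R1)"
      using assoc_mult_mat[of Wt m m J1 n "Wi * R1" m] Wtc J1c Wi R1c by simp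
    also have "\<dots> = - (T2 * W) * (Wi * R1)" unfolding G2' ..
    also have "\<dots> = - (T2 * ((W * Wi) * R1))"
      using assoc_mult_mat[of T2 m n W n "Wi * R1" m] assoc_mult_mat[of W n n Wi n R1 m] T2c Wc Wi R1c by simp
    also have "\<dots> = - (T2 * R1)" using Wi R1c by simp
    finally have WP: "Wt * (J1 * (Wi * R1)) = - (T2 * R1)" .
    have "Wt * Yf Wi = Wt * Q11 - Wt * (J1 * (Wi * R1))"
      unfolding Z by (rule mult_minus_distrib_mat) (use Wtc A J1c Wi R1c in auto)
    also have "\<dots> = Wt * Q11 + T2 * R1" unfolding WP
      by (rule minus_neg_mat) (use Wtc A R1c T2c in auto)
    also have "\<dots> = 1\<^sub>m m" using F11 .
    finally show "Wt * Yf Wi = 1\<^sub>m m" .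
  qed
  have C3: "Wi * (X * Q11 - Q21) = (transpose_mat Q22 * X + transpose_mat Q12) * Wti"
    if Wi: "Wi \<in> carrier_mat n n" "Wi * W = 1\<^sub>m n" and Wti: "Wti \<in> carrier_mat m m" "Wt * Wti = 1\<^sub>m m" for Wi Wti
  proof -
    have "Wi * R1 = Wi * (R1 * (Wt * Wti))" using R1c Wti by simp
    also have "\<dots> = Wi * ((R1 * Wt) * Wti)"
      using assoc_mult_mat[of R1 n m Wt m Wti m] R1c Wtc Wti by simp
    also have "\<dots> = Wi * (- (W * K2) * Wti)" unfolding G1 ..
    also have "\<dots> = - (Wi * ((W * K2) * Wti))" using Wi Wc K2c Wti by simp
    also have "\<dots> = - ((Wi * W) * (K2 * Wti))"
      using assoc_mult_mat[of W n n K2 m Wti m] assoc_mult_mat[of Wi n n W n "K2 * Wti" m] Wi Wc K2c Wti by simp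
    also have "\<dots> = - (K2 * Wti)" using Wi K2c Wti by simp
    finally have "Wi * R1 = - (K2 * Wti)" .
    moreover have "Wi * (X * Q11 - Q21) = - (Wi * R1)" unfolding R1eq using Wi R1c by simp
    ultimately show ?thesis unfolding K2eq by simp
  qed
  have C4: "(Q11 * Y + Q12) * Wi = Wti * (Y * transpose_mat Q22 - transpose_mat Q21)"
    if Wi: "Wi \<in> carrier_mat n n" "W * Wi = 1\<^sub>m n" and Wti: "Wti \<in> carrier_mat m m" "Wti * Wt = 1\<^sub>m m" for Wi Wti
  proof -
    have "Wti * T2 = (Wti * T2) * (W * Wi)" using T2c Wti Wi by simp
    also have "\<dots> = Wti * ((T2 * W) * Wi)"
      using assoc_mult_mat[of Wti m m T2 n "W * Wi" n] assoc_mult_mat[of T2 m n W n Wi n] T2c Wc Wi Wti by simp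
    also have "\<dots> = Wti * (- (Wt * J1) * Wi)" unfolding G2 ..
    also have "\<dots> = - (Wti * ((Wt * J1) * Wi))" using Wi Wtc J1c Wti by simp
    also have "\<dots> = - ((Wti * Wt) * (J1 * Wi))"
      using assoc_mult_mat[of Wt m m J1 n Wi n] assoc_mult_mat[of Wti m m Wt m "J1 * Wi" n] Wi Wtc J1c Wti by simp
    also have "\<dots> = - (J1 * Wi)" using Wi J1c Wti by simp
    finally have "Wti * T2 = - (J1 * Wi)" .
    moreover have "Wti * (Y * transpose_mat Q22 - transpose_mat Q21) = - (Wti * T2)" unfolding T2eq using Wti T2c by simp
    ultimately show ?thesis unfolding J1_def by simp
  qed
  show ?thesis
  proof (intro conjI allI impI)
    show "invertible_mat W = invertible_mat Wt"
    proof
      assume "invertible_mat W"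
      then obtain Wi where "Wi \<in> carrier_mat n n" "W * Wi = 1\<^sub>m n" using invertible_obtain[OF _ Wc] by blast
      then show "invertible_mat Wt" using HWt invertible_intro[OF Wtc] by blast
    next
      assume "invertible_mat Wt"
      then obtain Wti where "Wti \<in> carrier_mat m m" "Wt * Wti = 1\<^sub>m m" using invertible_obtain[OF _ Wtc] by blast
      then show "invertible_mat W" using HW invertible_intro[OF Wc] by blast
    qed
  next
    fix Wi Wti E F :: "complex mat"
    assume H: "Wi \<in> carrier_mat n n \<and> W * Wi = 1\<^sub>m n \<and> Wi * W = 1\<^sub>m n \<and>
       Wti \<in> carrier_mat m m \<and> Wt * Wti = 1\<^sub>m m \<and> Wti * Wt = 1\<^sub>m m \<and>
       E \<in> carrier_mat m m \<and> F \<in> carrier_mat n n"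
    then have Wi: "Wi \<in> carrier_mat n n" "W * Wi = 1\<^sub>m n" "Wi * W = 1\<^sub>m n"
      and Wti: "Wti \<in> carrier_mat m m" "Wt * Wti = 1\<^sub>m m" "Wti * Wt = 1\<^sub>m m"
      and E: "E \<in> carrier_mat m m" and F: "F \<in> carrier_mat n n" by auto
    have "Wi = Wi * (W * Zf Wti)" using HW(1)[OF Wti(1,2)] Wi by simp
    also have "\<dots> = (Wi * W) * Zf Wti" using assoc_mult_mat[of Wi n n W n "Zf Wti" n] Wi Wc HW(2)[OF Wti(1,2)] by simp
    also have "\<dots> = Zf Wti" using Wi HW(2)[OF Wti(1,2)] by simp
    finally have WiZ: "Wi = Zf Wti" .
    have "Wti = Wti * (Wt * Yf Wi)" using HWt(1)[OF Wi(1,2)] Wti by simp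
    also have "\<dots> = (Wti * Wt) * Yf Wi" using assoc_mult_mat[of Wti m m Wt m "Yf Wi" m] Wti Wtc HWt(2)[OF Wi(1,2)] by simp
    also have "\<dots> = Yf Wi" using Wti HWt(2)[OF Wi(1,2)] by simp
    finally have WtiY: "Wti = Yf Wi" .
    show "E * (Q11 + (Q11 * Y + Q12) * Wi * (X * Q11 - Q21)) * E = E * Wti * E"
      using WtiY unfolding Yf_def by simp
    show "F * Wi * F = F * (transpose_mat Q22 + (transpose_mat Q22 * X + transpose_mat Q12) * Wti
                             * (Y * transpose_mat Q22 - transpose_mat Q21)) * F"
      using WiZ unfolding Zf_def by simp
    have PXc: "X * Q11 - Q21 \<in> carrier_mat n m" using X A C by (auto intro: minus_carrier_mat)
    have K'c: "transpose_mat Q22 * X + transpose_mat Q12 \<in> carrier_mat n m" using K2eq K2c by simp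
    have "F * Wi * (X * Q11 - Q21) = F * (Wi * (X * Q11 - Q21))"
      using assoc_mult_mat[of F n n Wi n "X * Q11 - Q21" m] F Wi PXc by simp
    moreover have "F * (transpose_mat Q22 * X + transpose_mat Q12) * Wti = F * ((transpose_mat Q22 * X + transpose_mat Q12) * Wti)"
      using assoc_mult_mat[of F n n "transpose_mat Q22 * X + transpose_mat Q12" m Wti m] F K'c Wti by simp
    ultimately show "X + F * Wi * (X * Q11 - Q21) * E = X + F * (transpose_mat Q22 * X + transpose_mat Q12) * Wti * E"
      using C3[OF Wi(1,3) Wti(1,2)] by simp
    have J'c: "Q11 * Y + Q12 \<in> carrier_mat m n" using J1c J1_def by simp
    have T'c: "Y * transpose_mat Q22 - transpose_mat Q21 \<in> carrier_mat m n" using Y Dt Ct by (auto intro: minus_carrier_mat)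
    have "E * (Q11 * Y + Q12) * Wi = E * ((Q11 * Y + Q12) * Wi)"
      using assoc_mult_mat[of E m m "Q11 * Y + Q12" n Wi n] E J'c Wi by simp
    moreover have "E * Wti * (Y * transpose_mat Q22 - transpose_mat Q21) = E * (Wti * (Y * transpose_mat Q22 - transpose_mat Q21))"
      using assoc_mult_mat[of E m m Wti m "Y * transpose_mat Q22 - transpose_mat Q21" n] E Wti T'c by simp
    ultimately show "Y + E * (Q11 * Y + Q12) * Wi * F = Y + E * Wti * (Y * transpose_mat Q22 - transpose_mat Q21) * F"
      using C4[OF Wi(1,2) Wti(1,3)] by simp
  qed
qed
end
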